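(* Let $a\in\mathbb R$, $b\in[a,\infty)$, $u\in[-\infty,\infty)$, $v\in(u,\infty]$, $d,L\in\mathbb N$, $l=(l_0,l_1,\dots,l_L)\in\mathbb N^{L+1}$ satisfy $d\ge\sum_{k=1}^Ll_k(l_{k-1}+1)$. Then for all $\theta,\vartheta\in\mathbb R^d$, $$\sup_{x\in[a,b]^{l_0}}\|\mathscr N^{\theta,l}_{u,v}(x)-\mathscr N^{\vartheta,l}_{u,v}(x)\|_\infty\le L\max\{1,|a|,|b|\}(\|l\|_\infty+1)^L\bigl(\max\{1,\|\theta\|_\infty,\|\vartheta\|_\infty\}\bigr)^{L-1}\|\theta-\vartheta\|_\infty.$$
   Context: $\|\cdot\|_\infty$ is the maximum norm on any $\mathbb R^n$ (also applied to $l$). For $r,s\in\mathbb N$, $k\in\mathbb N_0$, $\theta\in\mathbb R^d$ with $d\ge k+rs+r$, $\mathcal A^{\theta,k}_{r,s}\colon\mathbb R^s\to\mathbb R^r$ has $i$-th component $x\mapsto\sum_{j=1}^s\theta_{k+(i-1)s+j}x_j+\theta_{k+rs+i}$. $\mathfrak C_{u,v,n}$ applies $y\mapsto\max\{u,\min\{y,v\}\}$ componentwise on $\mathbb R^n$ (identity if $u=-\infty$, $v=\infty$) and $\mathfrak R_n$ applies $y\mapsto\max\{y,0\}$ componentwise. With $s_k=\sum_{j=1}^kl_j(l_{j-1}+1)$, $\mathscr N^{\theta,l}_{u,v}=\mathfrak C_{u,v,l_L}\circ\mathcal A^{\theta,s_{L-1}}_{l_L,l_{L-1}}\circ\mathfrak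 R_{l_{L-1}}\circ\cdots\circ\mathfrak R_{l_1}\circ\mathcal A^{\theta,0}_{l_1,l_0}\colon\mathbb R^{l_0}\to\mathbb R^{l_L}$ (for $L=1$ just $\mathfrak C_{u,v,l_1}\circ\mathcal A^{\theta,0}_{l_1,l_0}$). *)

theory Defs
  imports "HOL-Analysis.Analysis" "HOL-Library.Extended_Real"
begin

text \<open>Vectors in R^n are real lists of length n; the paper's 1-based component
  theta_m is the list entry theta ! (m - 1).\<close>

definition maxnorm :: "real list \<Rightarrow> real" where
  "maxnorm xs = Max (insert 0 (abs ` set xs))"

definition affine_map :: "real list \<Rightarrow> nat \<Rightarrow> nat \<Rightarrow> nat \<Rightarrow> real list \<Rightarrow> real list" where
  "affine_map \<theta> k r s x =
     map (\<lambda>i. (\<Sum>j<s. \<theta> ! (k + i * s + j) * x ! j) + \<theta> ! (k + r * s + i)) [0..<r]"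

definition clip :: "ereal \<Rightarrow> ereal \<Rightarrow> real \<Rightarrow> real" where
  "clip u v y = real_of_ereal (max u (min (ereal y) v))"

definition relu :: "real list \<Rightarrow> real list" where
  "relu xs = map (\<lambda>y. max y 0) xs"

definition sidx :: "nat list \<Rightarrow> nat \<Rightarrow> nat" where
  "sidx l k = (\<Sum>j\<in>{1..k}. l ! j * (l ! (j - 1) + 1))"

primrec layer :: "real list \<Rightarrow> nat list \<Rightarrow> real list \<Rightarrow> nat \<Rightarrow> real list" where
  "layer \<theta> l x 0 = x"
| "layer \<theta> l x (Suc k) =
     affine_map \<theta> (sidx l k) (l ! Suc k) (l ! k) (if k = 0 then x else relu (layer \<theta> l x k))"

definition realization :: "real list \<Rightarrow> nat list \<Rightarrow> ereal \<Rightarrow> ereal \<Rightarrow> real list \<Rightarrow> real list" where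
  "realization \<theta> l u v x = map (clip u v) (layer \<theta> l x (length l - 1))"

end

theory Submission
  imports Defs
begin

lemma maxnorm_nonneg: "0 \<le> maxnorm xs"
  unfolding maxnorm_def by (auto intro: Max_ge)

lemma maxnorm_nth: "i < length xs \<Longrightarrow> \<bar>xs!i\<bar> \<le> maxnorm xs"
  unfolding maxnorm_def by (auto intro!: Max_ge)

lemma maxnorm_le:
  assumes "0 \<le> B" "\<And>i. i < length xs \<Longrightarrow> \<bar>xs!i\<bar> \<le> B"
  shows "maxnorm xs \<le> B"
  unfolding maxnorm_def using assms by (auto simp: in_set_conv_nth)

lemma maxnorm_diff_nth:
  "length t' = length t \<Longrightarrow> i < length t \<Longrightarrow> \<bar>t!i - t'!i\<bar> \<le> maxnorm (map2 (-) t t')"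
  using maxnorm_nth[of i "map2 (-) t t'"] by simp

lemma maxnorm_tri:
  assumes "length ys = length xs" "length zs = length xs"
  shows "maxnorm (map2 (-) xs zs) \<le> maxnorm (map2 (-) xs ys) + maxnorm (map2 (-) ys zs)"
proof (rule maxnorm_le)
  show "0 \<le> maxnorm (map2 (-) xs ys) + maxnorm (map2 (-) ys zs)"
    using maxnorm_nonneg by (simp add: add_nonneg_nonneg)
  fix i assume i: "i < length (map2 (-) xs zs)"
  have "\<bar>xs!i - zs!i\<bar> \<le> \<bar>xs!i - ys!i\<bar> + \<bar>ys!i - zs!i\<bar>" by simp
  also have "\<dots> \<le> maxnorm (map2 (-) xs ys) + maxnorm (map2 (-) ys zs)"
    using maxnorm_nth[of i "map2 (-) xs ys"] maxnorm_nth[of i "map2 (-) ys zs"] i assms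
    by simp
  finally show "\<bar>map2 (-) xs zs ! i\<bar> \<le> maxnorm (map2 (-) xs ys) + maxnorm (map2 (-) ys zs)"
    using i by simp
qed

lemma sum_prod_bound:
  fixes p q :: "nat \<Rightarrow> real"
  assumes "\<And>j. j<s \<Longrightarrow> \<bar>p j\<bar> \<le> P" "\<And>j. j<s \<Longrightarrow> \<bar>q j\<bar> \<le> Q" "0 \<le> P"
  shows "\<bar>\<Sum>j<s. p j * q j\<bar> \<le> real s * P * Q"
proof -
  have "\<bar>\<Sum>j<s. p j * q j\<bar> \<le> (\<Sum>j<s. \<bar>p j * q j\<bar>)" by (rule sum_abs)
  also have "\<dots> \<le> (\<Sum>j<s. P * Q)"
  proof (rule sum_mono)
    fix j assume "j \<in> {..<s}"
    then show "\<bar>p j * q j\<bar> \<le> P * Q"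
      unfolding abs_mult using assms by (intro mult_mono) auto
  qed
  finally show ?thesis by simp
qed

lemma idx_bound: "i < (r::nat) \<Longrightarrow> j < s \<Longrightarrow> i * s + j < r * s"
proof -
  assume a: "i < r" "j < s"
  have "i * s + j < i * s + s" using a by simp
  also have "\<dots> = Suc i * s" by simp
  also have "\<dots> \<le> r * s" using a by (intro mult_le_mono1) simp
  finally show ?thesis .
qed

lemma affine_len[simp]: "length (affine_map t k r s z) = r"
  by (simp add: affine_map_def)

lemma affine_nth: "i < r \<Longrightarrow> affine_map t k r s z ! i
   = (\<Sum>j<s. t!(k+i * s+j) * z!j) + t!(k+r * s+i)"
  by (simp add: affine_map_def)

lemma affine_bound:
  assumes "k + r * s + r \<le> length t" "length z = s" "real s \<le> N" "maxnorm t \<le> M"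
  shows "maxnorm (affine_map t k r s z) \<le> (N+1) * M * max 1 (maxnorm z)"
proof (rule maxnorm_le)
  have M0: "0 \<le> M" using maxnorm_nonneg assms(4) order_trans by blast
  have N0: "0 \<le> N" using assms(3) of_nat_0_le_iff order_trans by blast
  show "0 \<le> (N+1) * M * max 1 (maxnorm z)" using M0 N0 by simp
  fix i assume "i < length (affine_map t k r s z)"
  then have i: "i < r" by simp
  have s1: "\<bar>\<Sum>j<s. t!(k+i * s+j) * z!j\<bar> \<le> real s * M * maxnorm z"
  proof (rule sum_prod_bound)
    fix j assume j: "j < s"
    have "k+i * s+j < length t" using idx_bound[OF i j] assms(1) by linarith
    then show "\<bar>t!(k+i * s+j)\<bar> \<le> M" using maxnorm_nth assms(4) order_trans by blast
    show "\<bar>z!j\<bar> \<le> maxnorm z" using j assms(2) maxnorm_nth by simp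
  qed (rule M0)
  have "k+r * s+i < length t" using i assms(1) by linarith
  then have s2: "\<bar>t!(k+r * s+i)\<bar> \<le> M" using maxnorm_nth assms(4) order_trans by blast
  have "real s * M * maxnorm z \<le> N * M * max 1 (maxnorm z)"
    using M0 N0 assms(3) maxnorm_nonneg[of z] by (intro mult_mono) auto
  moreover have "M \<le> M * max 1 (maxnorm z)" using M0
    by (metis max.cobounded1 mult.right_neutral mult_left_mono)
  ultimately have "\<bar>affine_map t k r s z ! i\<bar> \<le> N * M * max 1 (maxnorm z) + M * max 1 (maxnorm z)"
    using s1 s2 i by (simp add: affine_nth)
  then show "\<bar>affine_map t k r s z ! i\<bar> \<le> (N+1) * M * max 1 (maxnorm z)"
    by (simp add: algebra_simps)
qed

lemma affine_diff1:
  assumes "k + r * s + r \<le> length t" "length t' = length t" "length z = s" "real s \<le> N"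
  shows "maxnorm (map2 (-) (affine_map t k r s z) (affine_map t' k r s z))
     \<le> (N+1) * maxnorm (map2 (-) t t') * max 1 (maxnorm z)"
proof (rule maxnorm_le)
  define M where "M = maxnorm (map2 (-) t t')"
  have M0: "0 \<le> M" using maxnorm_nonneg M_def by simp
  have N0: "0 \<le> N" using assms(4) of_nat_0_le_iff order_trans by blast
  show "0 \<le> (N+1) * maxnorm (map2 (-) t t') * max 1 (maxnorm z)" using M0 N0 M_def by simp
  fix i assume "i < length (map2 (-) (affine_map t k r s z) (affine_map t' k r s z))"
  then have i: "i < r" by simp
  have s1: "\<bar>\<Sum>j<s. (t!(k+i * s+j) - t'!(k+i * s+j)) * z!j\<bar> \<le> real s * M * maxnorm z"
  proof (rule sum_prod_bound)
    fix j assume j: "j < s"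
    have "k+i * s+j < length t" using idx_bound[OF i j] assms(1) by linarith
    then show "\<bar>t!(k+i * s+j) - t'!(k+i * s+j)\<bar> \<le> M" using maxnorm_diff_nth assms(2) M_def by blast
    show "\<bar>z!j\<bar> \<le> maxnorm z" using j assms(3) maxnorm_nth by simp
  qed (rule M0)
  have "k+r * s+i < length t" using i assms(1) by linarith
  then have s2: "\<bar>t!(k+r * s+i) - t'!(k+r * s+i)\<bar> \<le> M" using maxnorm_diff_nth assms(2) M_def by blast
  have "real s * M * maxnorm z \<le> N * M * max 1 (maxnorm z)"
    using M0 N0 assms(4) maxnorm_nonneg[of z] by (intro mult_mono) auto
  moreover have "M \<le> M * max 1 (maxnorm z)" using M0
    by (metis max.cobounded1 mult.right_neutral mult_left_mono)
  moreover have "affine_map t k r s z ! i - affine_map t' k r s z ! i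
     = (\<Sum>j<s. (t!(k+i * s+j) - t'!(k+i * s+j)) * z!j) + (t!(k+r * s+i) - t'!(k+r * s+i))"
    using i by (simp add: affine_nth sum_subtractf left_diff_distrib)
  ultimately have "\<bar>affine_map t k r s z ! i - affine_map t' k r s z ! i\<bar>
     \<le> N * M * max 1 (maxnorm z) + M * max 1 (maxnorm z)"
    using s1 s2 by (smt (verit))
  then show "\<bar>map2 (-) (affine_map t k r s z) (affine_map t' k r s z) ! i\<bar>
     \<le> (N+1) * maxnorm (map2 (-) t t') * max 1 (maxnorm z)"
    using i by (simp add: algebra_simps M_def)
qed

lemma affine_diff2:
  assumes "k + r * s + r \<le> length t" "length z = s" "length z' = s" "real s \<le> N" "maxnorm t \<le> M"
  shows "maxnorm (map2 (-) (affine_map t k r s z) (affine_map t k r s z'))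
     \<le> N * M * maxnorm (map2 (-) z z')"
proof (rule maxnorm_le)
  have M0: "0 \<le> M" using maxnorm_nonneg assms(5) order_trans by blast
  have N0: "0 \<le> N" using assms(4) of_nat_0_le_iff order_trans by blast
  show "0 \<le> N * M * maxnorm (map2 (-) z z')" using M0 N0 maxnorm_nonneg by simp
  fix i assume "i < length (map2 (-) (affine_map t k r s z) (affine_map t k r s z'))"
  then have i: "i < r" by simp
  have s1: "\<bar>\<Sum>j<s. t!(k+i * s+j) * (z!j - z'!j)\<bar> \<le> real s * M * maxnorm (map2 (-) z z')"
  proof (rule sum_prod_bound)
    fix j assume j: "j < s"
    have "k+i * s+j < length t" using idx_bound[OF i j] assms(1) by linarith
    then show "\<bar>t!(k+i * s+j)\<bar> \<le> M" using maxnorm_nth assms(5) order_trans by blast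
    show "\<bar>z!j - z'!j\<bar> \<le> maxnorm (map2 (-) z z')" using j assms(2,3) maxnorm_diff_nth by simp
  qed (rule M0)
  have "real s * M * maxnorm (map2 (-) z z') \<le> N * M * maxnorm (map2 (-) z z')"
    using M0 N0 assms(4) maxnorm_nonneg by (intro mult_right_mono mult_mono) auto
  moreover have "affine_map t k r s z ! i - affine_map t k r s z' ! i
     = (\<Sum>j<s. t!(k+i * s+j) * (z!j - z'!j))"
    using i by (simp add: affine_nth sum_subtractf right_diff_distrib)
  ultimately show "\<bar>map2 (-) (affine_map t k r s z) (affine_map t k r s z') ! i\<bar>
     \<le> N * M * maxnorm (map2 (-) z z')"
    using s1 i by simp
qed

lemma relu_len[simp]: "length (relu y) = length y"
  by (simp add: relu_def)

lemma maxnorm_relu: "maxnorm (relu y) \<le> maxnorm y"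
proof (rule maxnorm_le[OF maxnorm_nonneg])
  fix i assume "i < length (relu y)"
  then have i: "i < length y" by simp
  have "\<bar>max (y!i) 0\<bar> \<le> \<bar>y!i\<bar>" by simp
  also have "\<dots> \<le> maxnorm y" using maxnorm_nth i by blast
  finally show "\<bar>relu y ! i\<bar> \<le> maxnorm y" using i by (simp add: relu_def)
qed

lemma maxnorm_relu_diff:
  assumes "length y' = length y"
  shows "maxnorm (map2 (-) (relu y) (relu y')) \<le> maxnorm (map2 (-) y y')"
proof (rule maxnorm_le[OF maxnorm_nonneg])
  fix i assume "i < length (map2 (-) (relu y) (relu y'))"
  then have i: "i < length y" using assms by simp
  have "\<bar>max (y!i) 0 - max (y'!i) 0\<bar> \<le> \<bar>y!i - y'!i\<bar>" by (simp add: max_def abs_if)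
  also have "\<dots> \<le> maxnorm (map2 (-) y y')" using maxnorm_diff_nth assms i by blast
  finally show "\<bar>map2 (-) (relu y) (relu y') ! i\<bar> \<le> maxnorm (map2 (-) y y')"
    using i assms by (simp add: relu_def)
qed

lemma clip_lip:
  assumes "u < v"
  shows "\<bar>clip u v y - clip u v y'\<bar> \<le> \<bar>y - y'\<bar>"
  using assms
  by (cases u rule: ereal_cases; cases v rule: ereal_cases)
     (auto simp: clip_def max_def min_def abs_if)


lemma sidx_Suc: "sidx l (Suc k) = sidx l k + l ! Suc k * (l ! k + 1)"
  by (simp add: sidx_def)

theorem corollary2p37:
  fixes a b :: real and u v :: ereal and d L :: nat and l :: "nat list"
    and \<theta> \<theta>' :: "real list"
  assumes "a \<le> b" and "u < v" and "d \<ge> 1" and "L \<ge> 1"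
    and "length l = L + 1" and "\<forall>i\<in>set l. i \<ge> 1"
    and "d \<ge> (\<Sum>k\<in>{1..L}. l ! k * (l ! (k - 1) + 1))"
    and "length \<theta> = d" and "length \<theta>' = d"
  shows "(SUP x\<in>{x. length x = l ! 0 \<and> (\<forall>y\<in>set x. a \<le> y \<and> y \<le> b)}.
            maxnorm (map2 (-) (realization \<theta> l u v x) (realization \<theta>' l u v x)))
         \<le> real L * max 1 (max \<bar>a\<bar> \<bar>b\<bar>) * (real (Max (set l)) + 1) ^ L
            * (max 1 (max (maxnorm \<theta>) (maxnorm \<theta>'))) ^ (L - 1)
            * maxnorm (map2 (-) \<theta> \<theta>')"
proof (rule cSUP_least)
  let ?S = "{x. length x = l ! 0 \<and> (\<forall>y\<in>set x. a \<le> y \<and> y \<le> b)}"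
  have "replicate (l!0) a \<in> ?S" using assms(1) by simp
  then show "?S \<noteq> {}" by blast
  define c where "c = max 1 (max \<bar>a\<bar> \<bar>b\<bar>)"
  define N where "N = real (Max (set l))"
  define M where "M = max 1 (max (maxnorm \<theta>) (maxnorm \<theta>'))"
  define D where "D = maxnorm (map2 (-) \<theta> \<theta>')"
  have c1: "1 \<le> c" and M1: "1 \<le> M" and N0: "0 \<le> N" and D0: "0 \<le> D"
    by (auto simp: c_def M_def N_def D_def maxnorm_nonneg)
  have Mth: "maxnorm \<theta> \<le> M" "maxnorm \<theta>' \<le> M" by (auto simp: M_def)
  have sizeN: "real (l!k) \<le> N" if "k \<le> L" for k
  proof -
    have "l!k \<in> set l" using that assms(5) by simp
    then show ?thesis unfolding N_def by simp
  qed
  have idx: "sidx l k + l!Suc k * l!k + l!Suc k \<le> d" if "k < L" for k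
  proof -
    have "sidx l (Suc k) \<le> (\<Sum>k\<in>{1..L}. l ! k * (l ! (k - 1) + 1))"
      unfolding sidx_def using that by (intro sum_mono2) auto
    then show ?thesis using assms(7) by (simp add: sidx_Suc algebra_simps)
  qed
  fix x assume x: "x \<in> ?S"
  define inp where "inp t k = (if k = 0 then x else relu (layer t l x k))" for t k
  have lay_Suc: "layer t l x (Suc k) = affine_map t (sidx l k) (l!Suc k) (l!k) (inp t k)" for t k
    by (simp add: inp_def)
  have len: "length (layer t l x k) = l!k" if "k \<le> L" for t k
    using that x by (cases k) auto
  have len_inp: "length (inp t k) = l!k" if "k \<le> L" for t k
    using len[OF that] x by (simp add: inp_def)
  have bnd: "maxnorm (inp t k) \<le> c * (N+1)^k * M^k"
    if "k \<le> L" "maxnorm t \<le> M" "length t = d" for t k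
    using that(1)
  proof (induction k)
    case 0
    show ?case unfolding inp_def
    proof (simp, rule maxnorm_le)
      show "0 \<le> c" using c1 by simp
      fix i assume "i < length x"
      then have "x!i \<in> set x" by simp
      then have "a \<le> x!i" "x!i \<le> b" using x by auto
      then show "\<bar>x!i\<bar> \<le> c" unfolding c_def by auto
    qed
  next
    case (Suc k)
    have B1: "1 \<le> c * (N+1)^k * M^k" using c1 M1 N0
      by (metis le_add_same_cancel2 mult_ge1_I one_le_power)
    have "maxnorm (inp t (Suc k)) \<le> maxnorm (layer t l x (Suc k))"
      by (simp add: inp_def maxnorm_relu)
    also have "\<dots> \<le> (N+1) * M * max 1 (maxnorm (inp t k))"
      unfolding lay_Suc
      by (rule affine_bound) (use idx[of k] Suc len_inp[of k t] sizeN[of k] that in auto)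
    also have "\<dots> \<le> (N+1) * M * (c * (N+1)^k * M^k)"
      using Suc B1 M1 N0 by (intro mult_left_mono) auto
    finally show ?case by (simp add: algebra_simps)
  qed
  have diff: "maxnorm (map2 (-) (layer \<theta> l x k) (layer \<theta>' l x k))
      \<le> real k * c * (N+1)^k * M^(k-1) * D" if "k \<le> L" for k
    using that
  proof (induction k)
    case 0
    show ?case by (simp, rule maxnorm_le) auto
  next
    case (Suc k)
    define P where "P = c * (N+1)^k * M^k * D"
    have P0: "0 \<le> P" unfolding P_def using c1 M1 N0 D0 by simp
    have E: "maxnorm (map2 (-) (inp \<theta> k) (inp \<theta>' k)) \<le> real k * c * (N+1)^k * M^(k-1) * D"
    proof (cases "k = 0")
      case True
      have "maxnorm (map2 (-) x x) \<le> 0" by (rule maxnorm_le) auto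
      then show ?thesis using True by (simp add: inp_def)
    next
      case False
      then show ?thesis using maxnorm_relu_diff[of "layer \<theta>' l x k" "layer \<theta> l x k"]
          Suc len[of k] by (simp add: inp_def)
    qed
    have lk: "length (inp \<theta> k) = l!k" "length (inp \<theta>' k) = l!k" using len_inp Suc by auto
    have "maxnorm (map2 (-) (layer \<theta> l x (Suc k)) (layer \<theta>' l x (Suc k)))
       \<le> maxnorm (map2 (-) (affine_map \<theta> (sidx l k) (l!Suc k) (l!k) (inp \<theta> k))
                            (affine_map \<theta>' (sidx l k) (l!Suc k) (l!k) (inp \<theta> k)))
        + maxnorm (map2 (-) (affine_map \<theta>' (sidx l k) (l!Suc k) (l!k) (inp \<theta> k))
                            (affine_map \<theta>' (sidx l k) (l!Suc k) (l!k) (inp \<theta>' k)))"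
      unfolding lay_Suc by (rule maxnorm_tri) auto
    also have "\<dots> \<le> (N+1) * D * max 1 (maxnorm (inp \<theta> k))
        + N * M * maxnorm (map2 (-) (inp \<theta> k) (inp \<theta>' k))"
      unfolding D_def
      by (intro add_mono affine_diff1 affine_diff2)
         (use idx[of k] Suc lk sizeN[of k] assms(8,9) Mth in auto)
    also have "\<dots> \<le> (N+1) * D * (c * (N+1)^k * M^k)
        + N * M * (real k * c * (N+1)^k * M^(k-1) * D)"
    proof (intro add_mono mult_left_mono)
      have B1: "1 \<le> c * (N+1)^k * M^k" using c1 M1 N0
        by (metis le_add_same_cancel2 mult_ge1_I one_le_power)
      show "max 1 (maxnorm (inp \<theta> k)) \<le> c * (N+1)^k * M^k"
        using bnd[of k \<theta>] Suc Mth assms(8) B1 by auto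
    qed (use E N0 M1 D0 in auto)
    also have "\<dots> \<le> real (Suc k) * c * (N+1)^(Suc k) * M^(Suc k - 1) * D"
    proof (cases "k = 0")
      case True
      then show ?thesis by simp
    next
      case False
      have MM: "M * M^(k-1) = M^k" using False by (cases k) auto
      have "N * M * (real k * c * (N+1)^k * M^(k-1) * D) = N * real k * P"
        unfolding P_def using MM by (simp add: algebra_simps)
      also have "\<dots> \<le> (N+1) * real k * P" using P0 by (intro mult_right_mono) auto
      finally have h: "N * M * (real k * c * (N+1)^k * M^(k-1) * D) \<le> (N+1) * real k * P" .
      have "(N+1) * D * (c * (N+1)^k * M^k) = (N+1) * P" unfolding P_def by (simp add: algebra_simps)
      moreover have "real (Suc k) * c * (N+1)^(Suc k) * M^(Suc k - 1) * D = (real k + 1) * (N+1) * P"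
        unfolding P_def by (simp add: algebra_simps)
      ultimately show ?thesis using h by (simp add: algebra_simps)
    qed
    finally show ?case .
  qed
  have "maxnorm (map2 (-) (realization \<theta> l u v x) (realization \<theta>' l u v x))
      \<le> maxnorm (map2 (-) (layer \<theta> l x L) (layer \<theta>' l x L))"
  proof (rule maxnorm_le[OF maxnorm_nonneg])
    fix i assume "i < length (map2 (-) (realization \<theta> l u v x) (realization \<theta>' l u v x))"
    then have i: "i < l!L" using len[of L] assms(5) by (simp add: realization_def)
    have "\<bar>clip u v (layer \<theta> l x L ! i) - clip u v (layer \<theta>' l x L ! i)\<bar>
        \<le> \<bar>layer \<theta> l x L ! i - layer \<theta>' l x L ! i\<bar>" by (rule clip_lip[OF assms(2)])
    also have "\<dots> \<le> maxnorm (map2 (-) (layer \<theta> l x L) (layer \<theta>' l x L))"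
      using maxnorm_diff_nth[of "layer \<theta>' l x L" "layer \<theta> l x L" i] len[of L] i by simp
    finally show "\<bar>map2 (-) (realization \<theta> l u v x) (realization \<theta>' l u v x) ! i\<bar>
        \<le> maxnorm (map2 (-) (layer \<theta> l x L) (layer \<theta>' l x L))"
      using i len[of L] assms(5) by (simp add: realization_def)
  qed
  also have "\<dots> \<le> real L * c * (N+1)^L * M^(L-1) * D" using diff by simp
  finally show "maxnorm (map2 (-) (realization \<theta> l u v x) (realization \<theta>' l u v x))
         \<le> real L * max 1 (max \<bar>a\<bar> \<bar>b\<bar>) * (real (Max (set l)) + 1) ^ L
            * (max 1 (max (maxnorm \<theta>) (maxnorm \<theta>'))) ^ (L - 1)
            * maxnorm (map2 (-) \<theta> \<theta>')"
    unfolding c_def N_def M_def D_def .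
qed

end
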